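(* For a Hirzebruch-Jung continued fraction $v=[n_1,\dots,n_l]$ (all $n_j\ge 2$ integers), the integer $q_1+q_l-q$ (computed for $v$ with its own length $l$) is unchanged when $v$ is replaced by $\tau(v)$ or by $r(v)$.
   Context: For numbers $n_1,\dots,n_l$ let $M(-n_1,\dots,-n_l)$ be the $l\times l$ tridiagonal symmetric matrix with diagonal entries $-n_1,\dots,-n_l$, entries $1$ directly above and below the diagonal, and $0$ elsewhere. Put $q=|\det M(-n_1,\dots,-n_l)|$, $q_1=|\det M(-n_2,\dots,-n_l)|$, $q_l=|\det M(-n_1,\dots,-n_{l-1})|$, with the convention that the determinant of the empty matrix is $1$. The continued fraction is $[n_1,\dots,n_l]=n_1-1/(n_2-1/(\cdots-1/n_l))$. The $\tau$-operation is $\tau([n_1,\dots,n_l])=[2,n_1,\dots,n_{l-1},n_l+1]$ (length $l+1$), and the reverse operation is $r([n_1,\dots,n_l])=[n_l,\dots,n_1]$. *)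

theory Defs
  imports "Jordan_Normal_Form.Determinant"
begin

definition tri_mat :: "int list \<Rightarrow> int mat" where
  "tri_mat ns = mat (length ns) (length ns)
     (\<lambda>(i, j). if i = j then - (ns ! i)
               else if i = j + 1 \<or> j = i + 1 then 1 else 0)"

text \<open>q = |det M(-n_1..-n_l)|; the determinant of the 0x0 matrix is 1.\<close>
definition hj_q :: "int list \<Rightarrow> int" where
  "hj_q ns = \<bar>det (tri_mat ns)\<bar>"

definition hj_q1 :: "int list \<Rightarrow> int" where
  "hj_q1 ns = \<bar>det (tri_mat (tl ns))\<bar>"

definition hj_ql :: "int list \<Rightarrow> int" where
  "hj_ql ns = \<bar>det (tri_mat (butlast ns))\<bar>"

definition hj_invariant :: "int list \<Rightarrow> int" where
  "hj_invariant ns = hj_q1 ns + hj_ql ns - hj_q ns"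

definition hj_tau :: "int list \<Rightarrow> int list" where
  "hj_tau ns = 2 # butlast ns @ [last ns + 1]"

definition hj_rev :: "int list \<Rightarrow> int list" where
  "hj_rev ns = rev ns"

end

theory Submission
  imports Defs
begin

lemma tri_carrier: "tri_mat ns \<in> carrier_mat (length ns) (length ns)"
  unfolding tri_mat_def by auto

lemma tri_idx: "i < length ns \<Longrightarrow> j < length ns \<Longrightarrow> tri_mat ns $$ (i,j) =
   (if i = j then - (ns ! i) else if i = j + 1 \<or> j = i + 1 then 1 else 0)"
  unfolding tri_mat_def by simp

lemma del_idx: "A \<in> carrier_mat (Suc n) (Suc n) \<Longrightarrow> i' < n \<Longrightarrow> j' < n \<Longrightarrow>
  mat_delete A i j $$ (i',j') = A $$ (if i' < i then i' else Suc i', if j' < j then j' else Suc j')"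
  unfolding mat_delete_def by simp

lemma det_nil: "det (tri_mat []) = 1"
  using tri_carrier[of "[]"] by (simp only: list.size) (rule det_dim_zero)

lemma det_single: "det (tri_mat [a]) = - a"
proof -
  have "det (tri_mat [a]) = (\<Sum>j<1. tri_mat [a] $$ (0,j) * cofactor (tri_mat [a]) 0 j)"
    using laplace_expansion_row[OF tri_carrier[of "[a]"], of 0] by simp
  also have "\<dots> = tri_mat [a] $$ (0,0) * cofactor (tri_mat [a]) 0 0" by simp
  also have "tri_mat [a] $$ (0,0) = - a" by (simp add: tri_idx)
  also have "cofactor (tri_mat [a]) 0 0 = det (mat_delete (tri_mat [a]) 0 0)"
    by (simp only: cofactor_def) simp
  also have "det (mat_delete (tri_mat [a]) 0 0) = 1"
  proof -
    have "mat_delete (tri_mat [a]) 0 0 \<in> carrier_mat 0 0"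
      using mat_delete_carrier[OF tri_carrier[of "[a]"]] by simp
    then show ?thesis by (rule det_dim_zero)
  qed
  finally show ?thesis by simp
qed

lemma det_cons2: "det (tri_mat (a#b#ns)) = - a * det (tri_mat (b#ns)) - det (tri_mat ns)"
proof -
  define T where "T = tri_mat (a#b#ns)"
  define n where "n = length ns"
  have T: "T \<in> carrier_mat (Suc (Suc n)) (Suc (Suc n))"
    unfolding T_def n_def using tri_carrier[of "a#b#ns"] by simp
  have Ti: "T $$ (i,j) = (if i = j then - ((a#b#ns) ! i) else if i = j + 1 \<or> j = i + 1 then 1 else 0)"
    if "i < Suc (Suc n)" "j < Suc (Suc n)" for i j
    unfolding T_def using that tri_idx[of i "a#b#ns" j] by (simp add: n_def)
  have "det T = (\<Sum>j<Suc (Suc n). T $$ (0,j) * cofactor T 0 j)"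
    by (rule laplace_expansion_row[OF T]) simp
  also have "\<dots> = (\<Sum>j\<in>{0,1}. T $$ (0,j) * cofactor T 0 j)"
  proof (rule sum.mono_neutral_right)
    show "\<forall>i\<in>{..<Suc (Suc n)} - {0, 1}. T $$ (0, i) * cofactor T 0 i = 0"
      by (auto simp: Ti)
  qed auto
  also have "\<dots> = T $$ (0,0) * cofactor T 0 0 + T $$ (0,1) * cofactor T 0 1" by simp
  also have "T $$ (0,0) = - a" by (simp add: Ti)
  also have "T $$ (0,1) = 1" by (simp add: Ti)
  also have "cofactor T 0 0 = det (mat_delete T 0 0)" by (simp only: cofactor_def) simp
  also have "cofactor T 0 1 = - det (mat_delete T 0 1)" by (simp only: cofactor_def) simp
  also have "mat_delete T 0 0 = tri_mat (b#ns)"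
  proof (rule eq_matI)
    fix i j assume ij: "i < dim_row (tri_mat (b#ns))" "j < dim_col (tri_mat (b#ns))"
    then have ij': "i < Suc n" "j < Suc n" using tri_carrier[of "b#ns"] by (auto simp: n_def)
    show "mat_delete T 0 0 $$ (i,j) = tri_mat (b#ns) $$ (i,j)"
      using ij' by (simp add: del_idx[OF T] Ti tri_idx n_def)
  next
    show "dim_row (mat_delete T 0 0) = dim_row (tri_mat (b#ns))"
      using T tri_carrier[of "b#ns"] by (simp add: n_def)
    show "dim_col (mat_delete T 0 0) = dim_col (tri_mat (b#ns))"
      using T tri_carrier[of "b#ns"] by (simp add: n_def)
  qed
  also have "det (mat_delete T 0 1) = det (tri_mat ns)"
  proof -
    define N where "N = mat_delete T 0 1"
    have N: "N \<in> carrier_mat (Suc n) (Suc n)"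
      unfolding N_def using mat_delete_carrier[OF T] by simp
    have Ni: "N $$ (i,j) = T $$ (Suc i, if j < 1 then j else Suc j)" if "i < Suc n" "j < Suc n" for i j
      unfolding N_def using del_idx[OF T that] by simp
    have "det N = (\<Sum>i<Suc n. N $$ (i,0) * cofactor N i 0)"
      by (rule laplace_expansion_column[OF N]) simp
    also have "\<dots> = (\<Sum>i\<in>{0}. N $$ (i,0) * cofactor N i 0)"
    proof (rule sum.mono_neutral_right)
      show "\<forall>i\<in>{..<Suc n} - {0}. N $$ (i, 0) * cofactor N i 0 = 0"
        by (auto simp: Ni Ti)
    qed auto
    also have "\<dots> = N $$ (0,0) * cofactor N 0 0" by simp
    also have "N $$ (0,0) = 1" by (simp add: Ni Ti)
    also have "cofactor N 0 0 = det (mat_delete N 0 0)" by (simp only: cofactor_def) simp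
    also have "mat_delete N 0 0 = tri_mat ns"
    proof (rule eq_matI)
      fix i j assume ij: "i < dim_row (tri_mat ns)" "j < dim_col (tri_mat ns)"
      then have ij': "i < n" "j < n" using tri_carrier[of ns] by (auto simp: n_def)
      show "mat_delete N 0 0 $$ (i,j) = tri_mat ns $$ (i,j)"
        using ij' by (simp add: del_idx[OF N] Ni Ti tri_idx n_def)
    next
      show "dim_row (mat_delete N 0 0) = dim_row (tri_mat ns)"
        using N tri_carrier[of ns] by (simp add: n_def)
      show "dim_col (mat_delete N 0 0) = dim_col (tri_mat ns)"
        using N tri_carrier[of ns] by (simp add: n_def)
    qed
    finally show ?thesis unfolding N_def by simp
  qed
  finally show ?thesis unfolding T_def by simp
qed


fun K :: "int list \<Rightarrow> int" where
  "K [] = 1"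
| "K [a] = a"
| "K (a#b#ns) = a * K (b#ns) - K ns"

lemma K_back: "K (ns @ [x, y]) = y * K (ns @ [x]) - K ns"
proof (induction ns rule: K.induct)
  case (3 a b ns)
  have h1: "K (b#ns@[x,y]) = y*K(b#ns@[x]) - K(b#ns)" using 3(1) by simp
  have h2: "K (ns@[x,y]) = y*K(ns@[x]) - K ns" using 3(2) by simp
  show ?case by (simp add: h1 h2 algebra_simps)
qed (auto simp: algebra_simps)

lemma K_back1: "ns \<noteq> [] \<Longrightarrow> K (ns @ [x]) = x * K ns - K (butlast ns)"
  using K_back[of "butlast ns" "last ns" x]
  by (metis append_butlast_last_id append_Cons append_Nil append_assoc)

lemma K_rev: "K (rev ns) = K ns"
  by (induction ns rule: K.induct) (auto simp: K_back)

lemma K_plus1: "K (ns @ [x+1]) = K (ns @ [x]) + K ns"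
  by (cases "ns = []") (auto simp: K_back1 algebra_simps)

lemma K_pos: "\<forall>n\<in>set ns. n \<ge> 2 \<Longrightarrow> K ns \<ge> 1 \<and> K ns \<ge> K (tl ns)"
proof (induction ns rule: K.induct)
  case (3 a b ns)
  then have "a \<ge> 2" "K (b#ns) \<ge> 1" "K (b#ns) \<ge> K ns" by auto
  then have h: "a * K (b#ns) \<ge> 2 * K (b#ns)" by (simp add: mult_right_mono)
  have "K (a#b#ns) = a * K (b#ns) - K ns" by simp
  then show ?case using h \<open>K (b#ns) \<ge> 1\<close> \<open>K (b#ns) \<ge> K ns\<close> by (simp only: list.sel) linarith
qed auto


lemma det_K: "det (tri_mat ns) = (-1) ^ length ns * K ns"
proof (induction ns rule: K.induct)
  case 1 then show ?case by (simp add: det_nil)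
next
  case (2 a) then show ?case by (simp add: det_single)
next
  case (3 a b ns) then show ?case by (simp add: det_cons2 algebra_simps)
qed

lemma q_K: "\<forall>n\<in>set ns. n \<ge> 2 \<Longrightarrow> \<bar>det (tri_mat ns)\<bar> = K ns"
  using K_pos[of ns] by (simp add: det_K abs_mult)

theorem lemma2p6:
  fixes v :: "int list"
  assumes "v \<noteq> []"
    and "\<forall>n \<in> set v. n \<ge> 2"
  shows "hj_invariant (hj_tau v) = hj_invariant v \<and> hj_invariant (hj_rev v) = hj_invariant v"
proof
  have g: "\<forall>n\<in>set xs. n \<ge> 2" if "set xs \<subseteq> set v" for xs using that assms(2) by auto
  have gb: "\<forall>n\<in>set (butlast v). n \<ge> 2" by (rule g) (simp add: in_set_butlastD subsetI)
  have gt: "\<forall>n\<in>set (tl v). n \<ge> 2" by (rule g) (simp add: list.set_sel(2) subsetI assms(1))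
  have "tl (rev v) = rev (butlast v)" by (metis butlast_rev rev_rev_ident)
  moreover have "butlast (rev v) = rev (tl v)" by (simp add: butlast_rev)
  ultimately show "hj_invariant (hj_rev v) = hj_invariant v"
    using gb gt assms(2)
    by (simp add: hj_invariant_def hj_q_def hj_q1_def hj_ql_def hj_rev_def q_K K_rev)
next
  obtain u z where v: "v = u @ [z]" using assms(1) by (metis rev_exhaust)
  have z: "z \<ge> 2" and gu: "\<forall>n\<in>set u. n \<ge> 2" using assms(2) v by auto
  show "hj_invariant (hj_tau v) = hj_invariant v"
  proof (cases u)
    case Nil
    have "hj_tau v = [2, z+1]" by (simp add: hj_tau_def v Nil)
    then have "hj_invariant (hj_tau v) = (z+1) + 2 - (2*(z+1) - 1)"
      using z by (simp add: hj_invariant_def hj_q_def hj_q1_def hj_ql_def q_K)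
    moreover have "hj_invariant v = 1 + 1 - z"
      using z by (simp add: hj_invariant_def hj_q_def hj_q1_def hj_ql_def q_K v Nil)
    ultimately show ?thesis by simp
  next
    case (Cons c w)
    have c: "c \<ge> 2" and gw: "\<forall>n\<in>set w. n \<ge> 2" using gu Cons by auto
    have tau: "hj_tau v = 2 # c # w @ [z+1]" by (simp add: hj_tau_def v Cons)
    have g1: "\<forall>n\<in>set (2 # c # w @ [z+1]). n \<ge> 2" using c gw z by auto
    have g2: "\<forall>n\<in>set (c # w @ [z+1]). n \<ge> 2" using c gw z by auto
    have g3: "\<forall>n\<in>set (2 # c # w). n \<ge> 2" using c gw by auto
    have g4: "\<forall>n\<in>set (w @ [z]). n \<ge> 2" using gw z by auto
    have g5: "\<forall>n\<in>set (c # w @ [z]). n \<ge> 2" using c gw z by auto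
    have g6: "\<forall>n\<in>set (c # w). n \<ge> 2" using c gw by auto
    have bl: "butlast (2 # c # w @ [z+1]) = 2 # c # w" by simp
    have e1: "K (2 # c # w @ [z+1]) = 2 * K (c # w @ [z+1]) - K (w @ [z+1])" by simp
    have e2: "K (c # w @ [z+1]) = K (c # w @ [z]) + K (c # w)"
      using K_plus1[of "c # w" z] by simp
    have e3: "K (w @ [z+1]) = K (w @ [z]) + K w" by (rule K_plus1)
    have e4: "K (2 # c # w) = 2 * K (c # w) - K w" by simp
    have "hj_invariant (hj_tau v) = K (c # w @ [z+1]) + K (2 # c # w) - K (2 # c # w @ [z+1])"
      unfolding tau hj_invariant_def hj_q_def hj_q1_def hj_ql_def
      using g1 g2 g3 by (simp only: q_K bl list.sel(3))
    moreover have "hj_invariant v = K (w @ [z]) + K (c # w) - K (c # w @ [z])"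
      unfolding hj_invariant_def hj_q_def hj_q1_def hj_ql_def v Cons
      using g4 g5 g6 by (simp add: q_K)
    ultimately show ?thesis using e1 e2 e3 e4 by simp
  qed
qed

end
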